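(* Let $\mathit{VI}$ be a finite set of variables with $\#\mathit{VI}=n$ and let $1\le k\le n$. Then for every $sh\in\mathit{SH}$, $\rho_{\mathit{TSD}_k}(sh^k)=sh^\star$.
   Context: $\mathit{SG}=\wp(\mathit{VI})\setminus\{\emptyset\}$ and $\mathit{SH}=\wp(\mathit{SG})$. For $sh\in\mathit{SH}$: the star-union is $sh^\star=\{S\in\mathit{SG}\mid \exists sh'\subseteq sh: S=\bigcup sh'\}$; for $j\ge1$ the $j$-self-union is $sh^j=\{S\in\mathit{SG}\mid \exists sh'\subseteq sh: \#sh'\le j,\ S=\bigcup sh'\}$. Also $\rho_{\mathit{TSD}_k}(sh)=\{\,S\in\mathit{SG}\mid \forall T\subseteq S:\ \#T<k\implies S=\bigcup\{U\in sh\mid T\subseteq U\subseteq S\}\,\}$. *)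

theory Defs
  imports Main
begin

definition SG :: "'a set \<Rightarrow> 'a set set" where
  "SG VI = Pow VI - {{}}"

definition SH :: "'a set \<Rightarrow> 'a set set set" where
  "SH VI = Pow (SG VI)"

definition star_union :: "'a set \<Rightarrow> 'a set set \<Rightarrow> 'a set set" where
  "star_union VI sh = {S \<in> SG VI. \<exists>sh' \<subseteq> sh. S = \<Union> sh'}"

definition self_union :: "'a set \<Rightarrow> nat \<Rightarrow> 'a set set \<Rightarrow> 'a set set" where
  "self_union VI j sh = {S \<in> SG VI. \<exists>sh' \<subseteq> sh. card sh' \<le> j \<and> S = \<Union> sh'}"

definition rho_TSD :: "'a set \<Rightarrow> nat \<Rightarrow> 'a set set \<Rightarrow> 'a set set" where
  "rho_TSD VI k sh = {S \<in> SG VI. \<forall>T \<subseteq> S. card T < k \<longrightarrow> S = \<Union> {U \<in> sh. T \<subseteq> U \<and> U \<subseteq> S}}"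

end

theory Submission
  imports Defs
begin

theorem proposition3p13:
  fixes VI :: "'a set" and n k :: nat and sh :: "'a set set"
  assumes "finite VI" and "card VI = n" and "1 \<le> k" and "k \<le> n"
    and "sh \<in> SH VI"
  shows "rho_TSD VI k (self_union VI k sh) = star_union VI sh"
proof
  show "rho_TSD VI k (self_union VI k sh) \<subseteq> star_union VI sh"
  proof
    fix S assume S: "S \<in> rho_TSD VI k (self_union VI k sh)"
    hence SG: "S \<in> SG VI" and
      eq: "S = \<Union> {U \<in> self_union VI k sh. {} \<subseteq> U \<and> U \<subseteq> S}"
      using assms(3) unfolding rho_TSD_def by auto
    have "S = \<Union> {V \<in> sh. V \<subseteq> S}"
    proof
      show "S \<subseteq> \<Union> {V \<in> sh. V \<subseteq> S}"
      proof
        fix x assume "x \<in> S"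
        then obtain U where U: "U \<in> self_union VI k sh" "U \<subseteq> S" "x \<in> U"
          using eq by blast
        then obtain sh' where "sh' \<subseteq> sh" "U = \<Union> sh'"
          unfolding self_union_def by auto
        then show "x \<in> \<Union> {V \<in> sh. V \<subseteq> S}" using U by blast
      qed
    qed auto
    then show "S \<in> star_union VI sh" using SG unfolding star_union_def
      by (intro CollectI conjI exI[of _ "{V \<in> sh. V \<subseteq> S}"]) auto
  qed
next
  show "star_union VI sh \<subseteq> rho_TSD VI k (self_union VI k sh)"
  proof
    fix S assume S: "S \<in> star_union VI sh"
    then obtain sh' where SG: "S \<in> SG VI" and sh': "sh' \<subseteq> sh" "S = \<Union> sh'"
      unfolding star_union_def by auto
    have SVI: "S \<subseteq> VI" using SG unfolding SG_def by auto
    have Sx: "\<And>y. y \<in> S \<Longrightarrow> \<exists>A\<in>sh'. y \<in> A" using sh'(2) by simp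
    have As: "\<And>A. A \<in> sh' \<Longrightarrow> A \<subseteq> S" using sh'(2) by auto
    have "S = \<Union> {U \<in> self_union VI k sh. T \<subseteq> U \<and> U \<subseteq> S}"
      if T: "T \<subseteq> S" "card T < k" for T
    proof
      show "S \<subseteq> \<Union> {U \<in> self_union VI k sh. T \<subseteq> U \<and> U \<subseteq> S}"
      proof
        fix x assume x: "x \<in> S"
        have fin: "finite T" using T(1) SVI assms(1) by (meson finite_subset)
        have "\<forall>t \<in> insert x T. \<exists>A. A \<in> sh' \<and> t \<in> A" using x T Sx by blast
        then obtain f where f: "\<And>t. t \<in> insert x T \<Longrightarrow> f t \<in> sh' \<and> t \<in> f t"
          by metis
        define U where "U = \<Union> (f ` insert x T)"
        have c: "card (f ` insert x T) \<le> k"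
        proof -
          have "card (f ` insert x T) \<le> card (insert x T)"
            using fin by (intro card_image_le) simp
          also have "\<dots> \<le> Suc (card T)" using fin by (simp add: card_insert_if)
          finally show ?thesis using T(2) by simp
        qed
        have sub: "U \<subseteq> S" unfolding U_def using f As by blast
        have "x \<in> U" "T \<subseteq> U" unfolding U_def using f by blast+
        moreover have "U \<in> self_union VI k sh"
          unfolding self_union_def SG_def
        proof (intro CollectI conjI exI[of _ "f ` insert x T"])
          show "U \<in> Pow VI - {{}}" using sub SVI \<open>x \<in> U\<close> by blast
          show "f ` insert x T \<subseteq> sh" using f sh'(1) by blast
        qed (use c U_def in auto)
        ultimately show "x \<in> \<Union> {U \<in> self_union VI k sh. T \<subseteq> U \<and> U \<subseteq> S}"
          using sub by blast
      qed
    qed auto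
    then show "S \<in> rho_TSD VI k (self_union VI k sh)"
      using SG unfolding rho_TSD_def by simp
  qed
qed

end
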